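(* Let $\lambda\in\overline{\mathrm{Pr}}_k$ and $\mu\in W\cdot\lambda$. Then $\mu\in\overline{\mathrm{Pr}}_k$ if and only if $\mu$ is dominant.
   Context: Let $\mathfrak g=\mathfrak{sl}_{n+1}(\mathbb C)$, $n\ge1$, $\mathfrak h$ the traceless diagonal matrices, $\Delta_+=\{\varepsilon_i-\varepsilon_j:i<j\}$, $\Delta_-=-\Delta_+$, $\alpha_i=\varepsilon_i-\varepsilon_{i+1}$; $(\cdot,\cdot)$ the invariant form on $\mathfrak h^*$ with $(\alpha,\alpha)=2$ for roots, $\langle\mu,\alpha^\vee\rangle=(\mu,\alpha)$; $\omega_i$ fundamental weights, $P^\vee=\bigoplus\mathbb Z\omega_i$, $\rho=\sum\omega_i$; $W$ the Weyl group, $w\cdot\mu=w(\mu+\rho)-\rho$. A weight $\mu\in\mathfrak h^*$ is dominant if $\langle\mu+\rho,\alpha^\vee\rangle\notin\{-1,-2,-3,\dots\}$ for all $\alpha\in\Delta_+$. Fix $k\in\mathbb Q$ with $k+n+1=p/q$, $p,q\in\mathbb N$ coprime, $p\ge n+1$. $\overline{\mathrm{Pr}}_{k,\mathbb Z}=\{\sum\lambda_i\omega_i:\lambda_i\in\mathbb N_0,\sum\lambda_i\le p-n-1\}$. For $w\in W,\eta\in P^\vee$, $C(w,\eta)$ means: for all $\alpha\in\Delta_+$, $0\le(\eta,\alpha)\le q-1$ if $w(\alpha)\in\Delta_+$ and $1\le(\eta,\alpha)\le q$ if $w(\alpha)\in\Delta_-$. The admissible weights of level $k$: $\overline{\mathrm{Pr}}_k=\{w\cdot(\mu-\tfrac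 pq\eta):\mu\in\overline{\mathrm{Pr}}_{k,\mathbb Z},w\in W,\eta\in P^\vee,C(w,\eta)\}$. *)

theory Defs
  imports Complex_Main "HOL-Combinatorics.Permutations"
begin

text \<open>Model of h* for sl_(n+1): a weight is given by its coordinates w.r.t.
 eps_0,...,eps_n (0-indexed), normalised to be traceless (sum zero), and
 extended by 0 outside {0..n}. Then (mu, eps_i - eps_j) = mu i - mu j.
 The Weyl group W = S_(n+1) is given by permutations sigma of {0..n},
 acting by (w mu) i = mu (inv sigma i), i.e. w(eps_j) = eps_(sigma j).\<close>

definition is_weight :: "nat \<Rightarrow> (nat \<Rightarrow> complex) \<Rightarrow> bool" where
  "is_weight n x \<longleftrightarrow> (\<forall>i>n. x i = 0) \<and> (\<Sum>i\<le>n. x i) = 0"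

definition rho :: "nat \<Rightarrow> nat \<Rightarrow> complex" where
  "rho n i = (if i \<le> n then of_nat n / 2 - of_nat i else 0)"

definition weyl_act :: "(nat \<Rightarrow> nat) \<Rightarrow> (nat \<Rightarrow> complex) \<Rightarrow> nat \<Rightarrow> complex" where
  "weyl_act \<sigma> x = (\<lambda>i. x (inv \<sigma> i))"

definition dot_act :: "nat \<Rightarrow> (nat \<Rightarrow> nat) \<Rightarrow> (nat \<Rightarrow> complex) \<Rightarrow> nat \<Rightarrow> complex" where
  "dot_act n \<sigma> x = (\<lambda>i. weyl_act \<sigma> (\<lambda>j. x j + rho n j) i - rho n i)"

definition weyl_group :: "nat \<Rightarrow> (nat \<Rightarrow> nat) set" where
  "weyl_group n = {\<sigma>. \<sigma> permutes {0..n}}"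

definition dot_orbit :: "nat \<Rightarrow> (nat \<Rightarrow> complex) \<Rightarrow> (nat \<Rightarrow> complex) set" where
  "dot_orbit n x = {dot_act n \<sigma> x | \<sigma>. \<sigma> \<in> weyl_group n}"

text \<open>Positive roots are eps_i - eps_j with i < j \<le> n; <mu+rho, alpha^v> = (mu+rho)_i - (mu+rho)_j.\<close>
definition dominant :: "nat \<Rightarrow> (nat \<Rightarrow> complex) \<Rightarrow> bool" where
  "dominant n x \<longleftrightarrow> (\<forall>i j. i < j \<and> j \<le> n \<longrightarrow>
     (\<forall>m::nat. m \<ge> 1 \<longrightarrow> (x i + rho n i) - (x j + rho n j) \<noteq> - of_nat m))"

text \<open>Coweight lattice P^v = sum Z omega_i (traceless vectors with integral differences).\<close>
definition coweight_lattice :: "nat \<Rightarrow> (nat \<Rightarrow> complex) set" where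
  "coweight_lattice n = {\<eta>. is_weight n \<eta> \<and> (\<forall>i<n. \<eta> i - \<eta> (Suc i) \<in> \<int>)}"

text \<open>Pr_{k,Z}: sum lambda_i omega_i with lambda_i = mu i - mu (i+1) in N_0 and
  sum lambda_i = mu 0 - mu n \<le> p - n - 1.\<close>
definition PrZ :: "nat \<Rightarrow> nat \<Rightarrow> (nat \<Rightarrow> complex) set" where
  "PrZ n p = {\<mu>. is_weight n \<mu> \<and> (\<forall>i<n. \<mu> i - \<mu> (Suc i) \<in> \<nat>) \<and>
      (\<exists>m::nat. \<mu> 0 - \<mu> n = of_nat m \<and> int m \<le> int p - int n - 1)}"

definition cond_C :: "nat \<Rightarrow> nat \<Rightarrow> (nat \<Rightarrow> nat) \<Rightarrow> (nat \<Rightarrow> complex) \<Rightarrow> bool" where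
  "cond_C n q \<sigma> \<eta> \<longleftrightarrow> (\<forall>i j. i < j \<and> j \<le> n \<longrightarrow>
     (if \<sigma> i < \<sigma> j
      then (\<exists>m::int. \<eta> i - \<eta> j = of_int m \<and> 0 \<le> m \<and> m \<le> int q - 1)
      else (\<exists>m::int. \<eta> i - \<eta> j = of_int m \<and> 1 \<le> m \<and> m \<le> int q)))"

definition admissible :: "nat \<Rightarrow> nat \<Rightarrow> nat \<Rightarrow> (nat \<Rightarrow> complex) set" where
  "admissible n p q = {dot_act n \<sigma> (\<lambda>i. \<mu> i - (of_nat p / of_nat q) * \<eta> i) | \<mu> \<sigma> \<eta>.
     \<mu> \<in> PrZ n p \<and> \<sigma> \<in> weyl_group n \<and> \<eta> \<in> coweight_lattice n \<and> cond_C n q \<sigma> \<eta>}"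

end

theory Submission
  imports Defs
begin

lemma dot_rho: "dot_act n \<sigma> x i + rho n i = x (inv \<sigma> i) + rho n (inv \<sigma> i)"
  by (simp add: dot_act_def weyl_act_def)

lemma dot_comp:
  assumes "bij \<tau>" "bij \<sigma>"
  shows "dot_act n \<tau> (dot_act n \<sigma> x) = dot_act n (\<tau> \<circ> \<sigma>) x"
proof
  fix i
  have "inv (\<tau> \<circ> \<sigma>) = inv \<sigma> \<circ> inv \<tau>" using assms by (simp add: o_inv_distrib)
  then show "dot_act n \<tau> (dot_act n \<sigma> x) i = dot_act n (\<tau> \<circ> \<sigma>) x i"
    by (simp add: dot_act_def weyl_act_def)
qed

lemma mu_diff:
  assumes "\<mu> \<in> PrZ n p" "i \<le> j"
  shows "j \<le> n \<Longrightarrow> \<exists>d::nat. \<mu> i - \<mu> j = of_nat d"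
  using assms(2)
proof (induction j rule: dec_induct)
  case base
  show ?case by (metis diff_self of_nat_0)
next
  case (step j)
  then obtain d where d: "\<mu> i - \<mu> j = of_nat d" by auto
  have "\<mu> j - \<mu> (Suc j) \<in> \<nat>" using assms(1) step by (auto simp: PrZ_def)
  then obtain e where e: "\<mu> j - \<mu> (Suc j) = of_nat e" by (auto elim: Nats_cases)
  have "\<mu> i - \<mu> (Suc j) = of_nat (d + e)" using d e by (simp add: algebra_simps)
  then show ?case by blast
qed

lemma a_bound:
  assumes "\<mu> \<in> PrZ n p" "i < j" "j \<le> n"
  shows "\<exists>a::nat. (\<mu> i + rho n i) - (\<mu> j + rho n j) = of_nat a \<and> 1 \<le> a \<and> int a \<le> int p - 1"
proof -
  obtain d1 where d1: "\<mu> 0 - \<mu> i = of_nat d1" using mu_diff[OF assms(1), of 0 i] assms by auto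
  obtain d where d: "\<mu> i - \<mu> j = of_nat d" using mu_diff[OF assms(1), of i j] assms by auto
  obtain d2 where d2: "\<mu> j - \<mu> n = of_nat d2" using mu_diff[OF assms(1), of j n] assms by auto
  obtain m :: nat where m: "\<mu> 0 - \<mu> n = of_nat m" "int m \<le> int p - int n - 1"
    using assms(1) by (auto simp: PrZ_def)
  have "(of_nat m :: complex) = of_nat (d1 + d + d2)" using d1 d d2 m(1)
    by (simp add: algebra_simps)
  then have md: "m = d1 + d + d2" using of_nat_eq_iff by blast
  have r: "rho n i - rho n j = of_nat (j - i)" using assms by (simp add: rho_def of_nat_diff)
  have "(\<mu> i + rho n i) - (\<mu> j + rho n j) = of_nat (d + (j - i))"
    using d r by (simp add: algebra_simps)
  moreover have "1 \<le> d + (j - i)" using assms by simp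
  moreover have "int (d + (j - i)) \<le> int p - 1" using md m(2) assms by simp
  ultimately show ?thesis by blast
qed

lemma keyK:
  fixes a m t :: int and p q :: nat
  assumes "coprime p q" "q > 0" "0 \<le> m" "m \<le> int q"
    and eq: "of_int a - (of_nat p / of_nat q) * of_int m = (of_int t :: complex)"
    and "1 \<le> a" "a \<le> int p - 1"
  shows "(m = 0 \<and> t = a) \<or> (m = int q \<and> t = a - int p)"
proof -
  have qn: "(of_nat q :: complex) \<noteq> 0" using assms(2) by simp
  from eq have "of_int a * of_nat q - of_nat p * of_int m = (of_int t * of_nat q :: complex)"
    using qn by (simp add: field_simps)
  then have "(of_int (a * int q - int p * m) :: complex) = of_int (t * int q)" by simp
  then have e: "a * int q - int p * m = t * int q" using of_int_eq_iff by blast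
  then have "int q dvd int p * m" by (metis dvd_triv_right dvd_diff mult.commute diff_diff_eq2 diff_self minus_diff_eq add.commute
      dvd_minus_iff right_diff_distrib' diff_add_cancel)
  moreover have "coprime (int q) (int p)" using assms(1) by (simp add: coprime_commute)
  ultimately have "int q dvd m" using coprime_dvd_mult_right_iff by blast
  then obtain c where c: "m = int q * c" by blast
  have "c = 0 \<or> c = 1"
  proof -
    have "0 \<le> c" using c assms(2,3) by (simp add: zero_le_mult_iff)
    moreover have "c \<le> 1" using c assms(2,4) by (metis mult.right_neutral mult_le_cancel_left_pos of_nat_0_less_iff)
    ultimately show ?thesis by linarith
  qed
  then show ?thesis
  proof
    assume "c = 0" then have "m = 0" using c by simp
    then show ?thesis using e assms(2) by simp
  next
    assume "c = 1" then have "m = int q" using c by simp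
    then have "(a - int p) * int q = t * int q" using e by (simp add: algebra_simps)
    then show ?thesis using \<open>m = int q\<close> assms(2) by simp
  qed
qed

theorem mainTheorem6:
  fixes n p q :: nat and k :: rat and lam mu :: "nat \<Rightarrow> complex"
  assumes "n \<ge> 1"
    and "p > 0" and "q > 0" and "coprime p q"
    and "k + of_nat n + 1 = of_nat p / of_nat q"
    and "p \<ge> n + 1"
    and "lam \<in> admissible n p q"
    and "mu \<in> dot_orbit n lam"
  shows "mu \<in> admissible n p q \<longleftrightarrow> dominant n mu"
proof
  assume "mu \<in> admissible n p q"
  then obtain \<mu> \<sigma> \<eta> where mu: "mu = dot_act n \<sigma> (\<lambda>i. \<mu> i - (of_nat p / of_nat q) * \<eta> i)"
    and \<mu>: "\<mu> \<in> PrZ n p" and \<sigma>: "\<sigma> permutes {0..n}" and \<eta>: "\<eta> \<in> coweight_lattice n"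
    and C: "cond_C n q \<sigma> \<eta>"
    by (auto simp: admissible_def weyl_group_def)
  define v where "v = (\<lambda>i. \<mu> i - (of_nat p / of_nat q) * \<eta> i + rho n i)"
  have mv: "mu i + rho n i = v (inv \<sigma> i)" for i
    unfolding mu v_def by (simp add: dot_rho)
  have vd: "v i - v j = (\<mu> i + rho n i) - (\<mu> j + rho n j) - (of_nat p / of_nat q) * (\<eta> i - \<eta> j)" for i j
    by (simp add: v_def algebra_simps add_divide_distrib[symmetric])
  have perm: "inv \<sigma> permutes {0..n}" using \<sigma> by (rule permutes_inv)
  show "dominant n mu"
    unfolding dominant_def
  proof (intro allI impI notI)
    fix i j and kk :: nat
    assume ij: "i < j \<and> j \<le> n" and kk: "1 \<le> kk"
      and eq: "mu i + rho n i - (mu j + rho n j) = - of_nat kk"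
    define i' where "i' = inv \<sigma> i"
    define j' where "j' = inv \<sigma> j"
    have i'n: "i' \<le> n" "j' \<le> n" using perm ij unfolding i'_def j'_def
      by (auto dest: permutes_in_image[of _ "{0..n}"])
    have si: "\<sigma> i' = i" "\<sigma> j' = j" unfolding i'_def j'_def
      using \<sigma> by (auto simp: permutes_inverses)
    have neq: "i' \<noteq> j'" using si ij by auto
    have veq: "v i' - v j' = - of_nat kk" using eq mv i'_def j'_def by simp
    show False
    proof (cases "i' < j'")
      case True
      with C i'n si ij obtain m :: int where m: "\<eta> i' - \<eta> j' = of_int m" "0 \<le> m" "m \<le> int q - 1"
        unfolding cond_C_def by (metis)
      obtain a :: nat where a: "(\<mu> i' + rho n i') - (\<mu> j' + rho n j') = of_nat a" "1 \<le> a" "int a \<le> int p - 1"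
        using a_bound[OF \<mu> True i'n(2)] by blast
      have "of_int (int a) - (of_nat p / of_nat q) * of_int m = (of_int (- int kk) :: complex)"
        using veq vd[of i' j'] a m by simp
      from keyK[OF assms(4) assms(3) m(2) _ this] m a kk show False by auto
    next
      case False
      then have lt: "j' < i'" using neq by simp
      have "\<not> \<sigma> j' < \<sigma> i'" using si ij by simp
      with C i'n lt obtain m :: int where m: "\<eta> j' - \<eta> i' = of_int m" "1 \<le> m" "m \<le> int q"
        unfolding cond_C_def by (metis)
      obtain a :: nat where a: "(\<mu> j' + rho n j') - (\<mu> i' + rho n i') = of_nat a" "1 \<le> a" "int a \<le> int p - 1"
        using a_bound[OF \<mu> lt i'n(1)] by blast
      have "v j' - v i' = of_nat kk" using veq by (simp add: algebra_simps)
      then have "of_int (int a) - (of_nat p / of_nat q) * of_int m = (of_int (int kk) :: complex)"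
        using vd[of j' i'] a m by simp
      from keyK[OF assms(4) assms(3) _ m(3) this] m a kk show False by auto
    qed
  qed
next
  assume dom: "dominant n mu"
  obtain \<mu> \<sigma> \<eta> where lam: "lam = dot_act n \<sigma> (\<lambda>i. \<mu> i - (of_nat p / of_nat q) * \<eta> i)"
    and \<mu>: "\<mu> \<in> PrZ n p" and \<sigma>: "\<sigma> permutes {0..n}" and \<eta>: "\<eta> \<in> coweight_lattice n"
    and C: "cond_C n q \<sigma> \<eta>"
    using assms(7) by (auto simp: admissible_def weyl_group_def)
  obtain \<tau> where mu: "mu = dot_act n \<tau> lam" and \<tau>: "\<tau> permutes {0..n}"
    using assms(8) by (auto simp: dot_orbit_def weyl_group_def)
  define s where "s = \<tau> \<circ> \<sigma>"
  have s: "s permutes {0..n}" unfolding s_def by (rule permutes_compose[OF \<sigma> \<tau>])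
  have mus: "mu = dot_act n s (\<lambda>i. \<mu> i - (of_nat p / of_nat q) * \<eta> i)"
    unfolding mu lam s_def
    by (rule dot_comp[OF permutes_bij[OF \<tau>] permutes_bij[OF \<sigma>]])
  define v where "v = (\<lambda>i. \<mu> i - (of_nat p / of_nat q) * \<eta> i + rho n i)"
  have mv: "mu (s i) + rho n (s i) = v i" for i
    unfolding mus v_def using s by (simp add: dot_rho permutes_inverses)
  have vd: "v i - v j = (\<mu> i + rho n i) - (\<mu> j + rho n j) - (of_nat p / of_nat q) * (\<eta> i - \<eta> j)" for i j
    by (simp add: v_def algebra_simps add_divide_distrib[symmetric])
  have sn: "s i \<le> n" if "i \<le> n" for i using s that
    by (auto dest: permutes_in_image[of _ "{0..n}"])
  have "cond_C n q s \<eta>"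
    unfolding cond_C_def
  proof (intro allI impI)
    fix i j assume ij: "i < j \<and> j \<le> n"
    obtain m :: int where m: "\<eta> i - \<eta> j = of_int m" "0 \<le> m" "m \<le> int q"
    proof (cases "\<sigma> i < \<sigma> j")
      case True
      then obtain m :: int where "\<eta> i - \<eta> j = of_int m \<and> 0 \<le> m \<and> m \<le> int q - 1"
        using C ij unfolding cond_C_def by presburger
      then show ?thesis using that[of m] by auto
    next
      case False
      then obtain m :: int where "\<eta> i - \<eta> j = of_int m \<and> 1 \<le> m \<and> m \<le> int q"
        using C ij unfolding cond_C_def by presburger
      then show ?thesis using that[of m] by auto
    qed
    obtain a :: nat where a: "(\<mu> i + rho n i) - (\<mu> j + rho n j) = of_nat a" "1 \<le> a" "int a \<le> int p - 1"
      using a_bound[OF \<mu>] ij by blast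
    have vij: "v i - v j = of_nat a - (of_nat p / of_nat q) * of_int m"
      using vd[of i j] a m by simp
    show "if s i < s j
      then (\<exists>m::int. \<eta> i - \<eta> j = of_int m \<and> 0 \<le> m \<and> m \<le> int q - 1)
      else (\<exists>m::int. \<eta> i - \<eta> j = of_int m \<and> 1 \<le> m \<and> m \<le> int q)"
    proof (cases "s i < s j")
      case True
      have "m \<noteq> int q"
      proof
        assume mq: "m = int q"
        have "v i - v j = of_nat a - of_nat p" using vij mq assms(3) by simp
        then have "mu (s i) + rho n (s i) - (mu (s j) + rho n (s j)) = - of_nat (p - a)"
          using mv a(3) by (simp add: of_nat_diff)
        moreover have "1 \<le> p - a" using a(3) by simp
        ultimately show False using dom True sn ij unfolding dominant_def by blast
      qed
      then show ?thesis using True m by auto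
    next
      case False
      have "s i \<noteq> s j" using s ij permutes_inj[OF s] by (metis inj_eq less_irrefl)
      then have lt: "s j < s i" using False by simp
      have "m \<noteq> 0"
      proof
        assume "m = 0"
        then have "v j - v i = - of_nat a" using vij by (simp add: algebra_simps)
        then have "mu (s j) + rho n (s j) - (mu (s i) + rho n (s i)) = - of_nat a"
          using mv by simp
        then show False using dom lt sn ij a(2) unfolding dominant_def by auto
      qed
      then show ?thesis using False m by auto
    qed
  qed
  then show "mu \<in> admissible n p q"
    unfolding admissible_def weyl_group_def using mus \<mu> s \<eta> by blast
qed

end
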